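(* Fix a prompt $q$, constants $\beta>0$, $\varepsilon>0$, and assume $1-\rho^+(q)-\rho^-(q)>0$ and $0<p_{\mathrm{ref}}(q)<1$. Let $(\pi_k)_{k\ge0}$ be a sequence of policies such that, for each $k\ge1$, $\pi_k(\cdot\mid q)$ is the maximizer over all distributions $\pi(\cdot\mid q)$ on $\mathcal O$ of \[ \frac{(1-\rho^+(q)-\rho^-(q))\,\bigl(p_\pi(q)-p_{\pi_{k-1}}(q)\bigr)}{\sqrt{\mu_{\pi_{k-1}}(q)(1-\mu_{\pi_{k-1}}(q))+\varepsilon}}-\beta\,\mathrm{KL}\bigl(\pi(\cdot\mid q)\,\|\,\pi_{\mathrm{ref}}(\cdot\mid q)\bigr). \] Then for all $k\ge1$, $p_{\pi_k}(q)=\tilde h_{\varepsilon,\mathrm{ref}}(p_{\pi_{k-1}}(q))$, where \[ \tilde h_{\varepsilon,\mathrm{ref}}(p)=\frac{1}{1+\frac{1-p_{\mathrm{ref}}(q)}{p_{\mathrm{ref}}(q)}\exp\!\Bigl(-\frac{1-\rho^+(q)-\rho^-(q)}{\beta\sqrt{F(p)(1-F(p))+\varepsilon}}\Bigr)},\qquad F(p)=\rho^+(q)+(1-\rho^+(q)-\rho^-(q))\,p . \] Moreover, if in addition $\rho^+(q)+\rho^-(q)>0$, then $\tilde h_{\varepsilon,\mathrm{ref}}(p)<h_{\varepsilon,\mathrm{ref}}(p)$ for all $p\in[0,1]$, where \[ h_{\varepsilon,\mathrm{ref}}(p)=\frac{1}{1+\frac{1-p_{\mathrm{ref}}(q)}{p_{\mathrm{ref}}(q)}\exp\!\Bigl(-\frac{1}{\beta\sqrt{p(1-p)+\varepsilon}}\Bigr)}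 \] is the corresponding noiseless map; consequently the largest fixed point of $\tilde h_{\varepsilon,\mathrm{ref}}$ in $[0,1]$ is strictly smaller than the largest fixed point of $h_{\varepsilon,\mathrm{ref}}$ in $[0,1]$.
   Context: Setting: $\mathcal O$ is a countable set of responses; $r^*:\mathcal Q\times\mathcal O\to\{0,1\}$ is the true binary reward; a policy gives a distribution $\pi(\cdot\mid q)$ on $\mathcal O$; $p_\pi(q)=\mathbb E_{o\sim\pi(\cdot\mid q)}[r^*(q,o)]$. $\pi_{\mathrm{ref}}$ is a fixed reference policy and $p_{\mathrm{ref}}(q)=p_{\pi_{\mathrm{ref}}}(q)$. $\mathrm{KL}$ is the Kullback–Leibler divergence. Flip rates $\rho^+(q),\rho^-(q)\in[0,1]$ are the probabilities that a true reward $0$ is observed as $1$, respectively a true reward $1$ is observed as $0$. $\mu_{\pi}(q)=\rho^+(q)+(1-\rho^+(q)-\rho^-(q))\,p_{\pi}(q)$ is the mean observed (noisy) reward under $\pi$. *)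

theory Defs
  imports "HOL-Probability.Probability"
begin

text \<open>Policies at a prompt are probability mass functions on a countable response type.\<close>

definition succ_prob :: "('q \<Rightarrow> 'o \<Rightarrow> bool) \<Rightarrow> 'q \<Rightarrow> 'o pmf \<Rightarrow> real" where
  "succ_prob r q P = measure_pmf.expectation P (\<lambda>y. of_bool (r q y))"

definition noisy_mean :: "real \<Rightarrow> real \<Rightarrow> real \<Rightarrow> real" where
  "noisy_mean rp rm p = rp + (1 - rp - rm) * p"

definition KL_pmf :: "'o pmf \<Rightarrow> 'o pmf \<Rightarrow> ereal" where
  "KL_pmf P R =
     (if (\<exists>y. pmf P y > 0 \<and> pmf R y = 0) then \<infinity>
      else if (\<lambda>y. pmf P y * ln (pmf P y / pmf R y)) summable_on UNIV
        then ereal (\<Sum>\<^sub>\<infinity>y. pmf P y * ln (pmf P y / pmf R y))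
      else \<infinity>)"

definition h_noisy :: "real \<Rightarrow> real \<Rightarrow> real \<Rightarrow> real \<Rightarrow> real \<Rightarrow> real \<Rightarrow> real" where
  "h_noisy rp rm beta eps pref p =
     1 / (1 + (1 - pref) / pref *
        exp (- (1 - rp - rm) / (beta * sqrt (noisy_mean rp rm p * (1 - noisy_mean rp rm p) + eps))))"

definition h_clean :: "real \<Rightarrow> real \<Rightarrow> real \<Rightarrow> real \<Rightarrow> real" where
  "h_clean beta eps pref p =
     1 / (1 + (1 - pref) / pref * exp (- 1 / (beta * sqrt (p * (1 - p) + eps))))"

end

theory Submission
  imports Defs
begin

lemma pmf_has_sum_set: "(pmf P has_sum measure_pmf.prob P A) A"
proof -
  have a: "Infinite_Set_Sum.abs_summable_on (pmf P) A" by (rule pmf_abs_summable)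
  have a2: "Infinite_Sum.abs_summable_on (pmf P) A" using a abs_summable_equivalent by blast
  have s: "pmf P summable_on A" by (rule abs_summable_summable[OF a2])
  have e: "infsum (pmf P) A = measure_pmf.prob P A"
    by (simp only: measure_pmf_conv_infsetsum infsetsum_infsum[OF a])
  have "(pmf P has_sum infsum (pmf P) A) A" by (rule has_sum_infsum[OF s])
  then show ?thesis unfolding e .
qed
lemma pmf_has_sum_ind: "((\<lambda>y. pmf P y * of_bool (y \<in> A)) has_sum measure_pmf.prob P A) UNIV"
proof -
  have "((\<lambda>y. pmf P y * of_bool (y \<in> A)) has_sum measure_pmf.prob P A) UNIV \<longleftrightarrow> (pmf P has_sum measure_pmf.prob P A) A"
    by (rule has_sum_cong_neutral) auto
  then show ?thesis using pmf_has_sum_set by blast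
qed
lemma pmf_has_sum_1: "(pmf P has_sum 1) UNIV"
proof -
  have e: "measure_pmf.prob P UNIV = 1" using measure_pmf.prob_space[of P] unfolding space_measure_pmf .
  show ?thesis using pmf_has_sum_set[of P UNIV] unfolding e .
qed
lemma expect_ind: "measure_pmf.expectation P (\<lambda>y. of_bool (r y) :: real) = measure_pmf.prob P {y. r y}"
proof -
  have e: "(\<lambda>y. of_bool (r y) :: real) = indicator {y. r y}"
    by (rule ext) (simp only: indicator_def mem_Collect_eq)
  have "measure_pmf.expectation P (indicator {y. r y} :: 'a \<Rightarrow> real) = measure_pmf.prob P ({y. r y} \<inter> space (measure_pmf P))"
    by (rule Bochner_Integration.integral_indicator)
  then show ?thesis unfolding e space_measure_pmf Int_UNIV_right .
qed
lemma has_sum_diff':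
  fixes f g :: "'a \<Rightarrow> real"
  assumes "(f has_sum a) A" "(g has_sum b) A"
  shows "((\<lambda>x. f x - g x) has_sum (a - b)) A"
proof -
  have "((\<lambda>x. - g x) has_sum (- b)) A" unfolding has_sum_uminus minus_minus by (rule assms(2))
  then have "((\<lambda>x. f x + - g x) has_sum (a + - b)) A" by (rule has_sum_add[OF assms(1)])
  then show ?thesis unfolding diff_conv_add_uminus .
qed

lemma d_nonneg:
  fixes p s :: real
  assumes "0 \<le> p" "0 \<le> s" "p > 0 \<Longrightarrow> s > 0"
  shows "s - p + p * ln (p / s) \<ge> 0" and "s - p + p * ln (p / s) = 0 \<Longrightarrow> p = s"
proof -
  have main: "s - p + p * ln (p / s) = p * (s/p - 1 - ln (s/p))" if "p > 0"
  proof -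
    have "s > 0" using assms that by auto
    then have h2: "ln (p/s) = - ln (s/p)" using that by (simp add: ln_div)
    have h3: "p * ln (p/s) = - (p * ln (s/p))" unfolding h2 by simp
    have h1: "p * (s/p) = s" using that by simp
    have h4: "p * (s/p - 1 - ln (s/p)) = p * (s/p) - p - p * ln (s/p)"
      by (simp only: right_diff_distrib mult_1_right)
    show ?thesis using h1 h3 h4 by linarith
  qed
  show "s - p + p * ln (p / s) \<ge> 0"
  proof (cases "p > 0")
    case True
    have "s > 0" using assms True by auto
    then have sp0: "s/p > 0" using True by simp
    have "ln (s/p) \<le> s/p - 1" by (rule ln_le_minus_one[OF sp0])
    then have "p * (s/p - 1 - ln (s/p)) \<ge> 0" using True by (intro mult_nonneg_nonneg) linarith+
    then show ?thesis using main[OF True] by linarith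
  next
    case False
    then have "p = 0" using assms(1) by linarith
    then show ?thesis using assms by simp
  qed
  assume z: "s - p + p * ln (p / s) = 0"
  show "p = s"
  proof (cases "p > 0")
    case True
    have "s > 0" using assms True by auto
    then have sp0: "s/p > 0" using True by simp
    have "p * (s/p - 1 - ln (s/p)) = 0" using main[OF True] z by linarith
    then have "s/p - 1 - ln (s/p) = 0" using True by (metis mult_eq_0_iff order_less_irrefl)
    then have "ln (s/p) = s/p - 1" by linarith
    then have "s/p = 1" by (rule ln_eq_minus_one[OF sp0])
    then have "s = 1 * p" using True by (simp add: divide_eq_eq)
    then show ?thesis by simp
  next
    case False
    then have "p = 0" using assms(1) by linarith
    then show ?thesis using assms z by simp
  qed
qed

lemma gibbs:
  fixes R :: "'o pmf" and A :: "'o set" and C D beta :: real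
  assumes beta: "beta > 0" and pr0: "0 < measure_pmf.prob R A" and pr1: "measure_pmf.prob R A < 1"
  defines "a \<equiv> 1 / (1 + (1 - measure_pmf.prob R A) / measure_pmf.prob R A * exp (- C / beta))"
  shows "\<exists>Ps. measure_pmf.prob Ps A = a \<and>
     (\<forall>P. ereal (C * measure_pmf.prob Ps A + D) - ereal beta * KL_pmf Ps R
          \<le> ereal (C * measure_pmf.prob P A + D) - ereal beta * KL_pmf P R
          \<longrightarrow> measure_pmf.prob P A = a)"
proof -
  define pr where "pr = measure_pmf.prob R A"
  have pr0': "0 < pr" and pr1': "pr < 1" using pr0 pr1 by (auto simp: pr_def)
  define E where "E = exp (C / beta)"
  have E0: "E > 0" by (simp add: E_def)
  have em: "exp (- C / beta) = 1 / E" by (simp add: E_def exp_minus field_simps)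
  have a_eq: "a = pr * E / (pr * E + (1 - pr))"
    using pr0' pr1' E0 unfolding a_def pr_def[symmetric] em by (simp add: field_simps)
  have den: "pr * E + (1 - pr) > 0" using pr0' pr1' E0 by (smt (verit) mult_pos_pos)
  have a0: "0 < a" using a_eq den pr0' E0 by simp
  have a1: "a < 1"
  proof -
    have "pr * E < pr * E + (1 - pr)" using pr1' by simp
    then show ?thesis using a_eq den by (simp add: divide_less_eq_1_pos)
  qed
  have one_a: "1 - a = (1 - pr) / (pr * E + (1 - pr))" using a_eq den by (simp add: field_simps)
  define L1 where "L1 = ln (a / pr)"
  define L0 where "L0 = ln ((1 - a) / (1 - pr))"
  have rel: "a / pr = E * ((1 - a) / (1 - pr))"
    using a_eq one_a pr0' pr1' den by (simp add: field_simps)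
  have L10: "beta * (L1 - L0) = C"
  proof -
    have "L1 = ln E + L0" unfolding L1_def L0_def rel
      using E0 a1 pr1' by (subst ln_mult) auto
    then show ?thesis using beta by (simp add: E_def)
  qed
  define f where "f y = (if y \<in> A then a / pr else (1 - a) / (1 - pr))" for y
  have f0: "f y > 0" for y using a0 a1 pr0' pr1' by (simp add: f_def)
  have lnf: "ln (f y) = L0 + (L1 - L0) * of_bool (y \<in> A)" for y
    by (simp add: f_def L1_def L0_def)
  have neA: "set_pmf R \<inter> A \<noteq> {}" using pr0 measure_pmf_zero_iff[of R A] by auto
  have prc: "measure_pmf.prob R (- A) = 1 - pr"
    using measure_pmf.prob_compl[of A R] by (simp add: pr_def Compl_eq_Diff_UNIV)
  have neA': "set_pmf R \<inter> (- A) \<noteq> {}" using prc pr1' measure_pmf_zero_iff[of R "- A"] by auto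
  define Ps where "Ps = bind_pmf (bernoulli_pmf a) (\<lambda>b. if b then cond_pmf R A else cond_pmf R (- A))"
  have pmfPs: "pmf Ps y = pmf R y * f y" for y
    unfolding Ps_def pmf_bind using a0 a1
    by (simp add: pmf_cond[OF neA] pmf_cond[OF neA'] prc f_def pr_def[symmetric])
  have mPs: "measure_pmf.prob Ps A = a"
  proof -
    have "((\<lambda>y. a / pr * (pmf R y * of_bool (y \<in> A))) has_sum (a / pr * pr)) UNIV"
      by (rule has_sum_cmult_right[OF pmf_has_sum_ind[of R A, folded pr_def]])
    moreover have "(\<lambda>y. a / pr * (pmf R y * of_bool (y \<in> A))) = (\<lambda>y. pmf Ps y * of_bool (y \<in> A))"
      by (auto simp: pmfPs f_def)
    ultimately have "((\<lambda>y. pmf Ps y * of_bool (y \<in> A)) has_sum a) UNIV" using pr0' by simp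
    then show ?thesis using pmf_has_sum_ind[of Ps A] has_sum_unique by blast
  qed
  define d where "d P y = pmf Ps y - pmf P y + pmf P y * ln (pmf P y / pmf Ps y)" for P y
  define KLf where "KLf P y = pmf P y * ln (pmf P y / pmf R y)" for P y
  have supp: "pmf P y > 0 \<Longrightarrow> pmf Ps y > 0" if "\<And>y. pmf P y > 0 \<Longrightarrow> pmf R y > 0" for P y
    using that f0 by (simp add: pmfPs)
  have dnn: "d P y \<ge> 0" and dz: "d P y = 0 \<Longrightarrow> pmf P y = pmf Ps y"
    if "\<And>y. pmf P y > 0 \<Longrightarrow> pmf R y > 0" for P y
    using d_nonneg[of "pmf P y" "pmf Ps y"] supp[OF that] unfolding d_def by auto
  have ident: "KLf P y = d P y + ((pmf P y - pmf Ps y) + (L0 * pmf P y + (L1 - L0) * (pmf P y * of_bool (y \<in> A))))"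
    if "\<And>y. pmf P y > 0 \<Longrightarrow> pmf R y > 0" for P y
  proof (cases "pmf P y > 0")
    case True
    have R0: "pmf R y > 0" using that True by auto
    have h: "ln (pmf P y / pmf R y) = ln (pmf P y / pmf Ps y) + ln (f y)"
      using True R0 f0[of y] by (simp add: pmfPs ln_div ln_mult)
    show ?thesis unfolding KLf_def d_def h lnf by algebra
  next
    case False
    then have "pmf P y = 0" using pmf_nonneg[of P y] by linarith
    then show ?thesis unfolding KLf_def d_def by simp
  qed
  have Ghas: "((\<lambda>y. (pmf P y - pmf Ps y) + (L0 * pmf P y + (L1 - L0) * (pmf P y * of_bool (y \<in> A))))
      has_sum ((1 - 1) + (L0 * 1 + (L1 - L0) * measure_pmf.prob P A))) UNIV" for P
    by (intro has_sum_add has_sum_diff' has_sum_cmult_right pmf_has_sum_1 pmf_has_sum_ind)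
  have KLeq: "KL_pmf P R = ereal S" if "\<And>y. pmf P y > 0 \<Longrightarrow> pmf R y > 0" "(KLf P has_sum S) UNIV" for P S
  proof -
    have "\<not> (\<exists>y. pmf P y > 0 \<and> pmf R y = 0)" using that(1) by force
    moreover have "KLf P summable_on UNIV" using that(2) has_sum_imp_summable by blast
    moreover have "infsum (KLf P) UNIV = S" using that(2) infsumI by blast
    ultimately show ?thesis unfolding KL_pmf_def KLf_def[abs_def] by simp
  qed
  have PsR: "pmf Ps y > 0 \<Longrightarrow> pmf R y > 0" for y
    by (metis pmfPs f0 mult_eq_0_iff order_less_le pmf_nonneg)
  have dPs: "d Ps y = 0" for y by (simp add: d_def)
  have KLfPs: "KLf Ps = (\<lambda>y. 0 + ((pmf Ps y - pmf Ps y) + (L0 * pmf Ps y + (L1 - L0) * (pmf Ps y * of_bool (y \<in> A)))))"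
    using ident[OF PsR] dPs by (auto simp del: diff_self)
  have "(KLf Ps has_sum (L0 + (L1 - L0) * a)) UNIV"
    unfolding KLfPs using Ghas[of Ps] by (simp add: mPs)
  then have KLPs: "KL_pmf Ps R = ereal (L0 + (L1 - L0) * a)" using KLeq PsR by blast
  have valPs: "ereal (C * measure_pmf.prob Ps A + D) - ereal beta * KL_pmf Ps R = ereal (D - beta * L0)"
  proof -
    have e: "C * a + D - beta * (L0 + (L1 - L0) * a) = D - beta * L0"
      unfolding L10[symmetric] by (simp add: algebra_simps)
    show ?thesis unfolding KLPs mPs using e by simp
  qed
  show ?thesis
  proof (intro exI conjI allI impI)
    show "measure_pmf.prob Ps A = a" by (rule mPs)
    fix P
    assume ineq: "ereal (C * measure_pmf.prob Ps A + D) - ereal beta * KL_pmf Ps R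
          \<le> ereal (C * measure_pmf.prob P A + D) - ereal beta * KL_pmf P R"
    define m where "m = measure_pmf.prob P A"
    have notinf: "KL_pmf P R \<noteq> \<infinity>"
    proof
      assume "KL_pmf P R = \<infinity>"
      then show False using ineq beta unfolding valPs by simp
    qed
    have sP: "\<And>y. pmf P y > 0 \<Longrightarrow> pmf R y > 0"
      using notinf unfolding KL_pmf_def by (metis order_less_le pmf_nonneg)
    have summ: "KLf P summable_on UNIV"
      using notinf sP unfolding KL_pmf_def KLf_def[abs_def] by (auto split: if_splits)
    define S where "S = infsum (KLf P) UNIV"
    have hS: "(KLf P has_sum S) UNIV" using summ S_def has_sum_infsum by blast
    have KLP: "KL_pmf P R = ereal S" using KLeq[OF sP hS] .
    have dfun: "d P = (\<lambda>y. KLf P y - ((pmf P y - pmf Ps y) + (L0 * pmf P y + (L1 - L0) * (pmf P y * of_bool (y \<in> A)))))"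
      using ident[OF sP] by (auto simp: fun_eq_iff)
    have hd: "(d P has_sum (S - ((1 - 1) + (L0 * 1 + (L1 - L0) * m)))) UNIV"
      unfolding dfun m_def by (intro has_sum_diff' hS Ghas)
    have "D - beta * L0 \<le> C * m + D - beta * S"
      using ineq unfolding valPs KLP m_def by simp
    then have "beta * (S - (L0 + (L1 - L0) * m)) \<le> 0"
      unfolding L10[symmetric] by (simp add: algebra_simps)
    then have Sd: "S - (L0 + (L1 - L0) * m) \<le> 0" using beta by (simp add: mult_le_0_iff)
    have "d P y = 0" for y
      using nonneg_infsum_le_0D[of "d P" UNIV y] hd Sd infsumI[OF hd] has_sum_imp_summable[OF hd] dnn[OF sP]
      by simp
    then have "pmf P y = pmf Ps y" for y using dz[OF sP] by blast
    then have "P = Ps" by (intro pmf_eqI) simp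
    then show "measure_pmf.prob P A = a" using mPs by simp
  qed
qed


lemma largest_fp:
  fixes h :: "real \<Rightarrow> real"
  assumes c: "continuous_on {0..1} h" and b: "\<And>p. 0 < h p" "\<And>p. h p < 1"
  shows "\<exists>pt. pt \<in> {0..1} \<and> h pt = pt \<and> (\<forall>p\<in>{0..1}. h p = p \<longrightarrow> p \<le> pt)"
proof -
  define S where "S = {p \<in> {0..1}. h p - p = 0}"
  have cg: "continuous_on {0..1} (\<lambda>p. h p - p)" by (intro continuous_intros c)
  have "closed S" unfolding S_def by (rule continuous_closed_preimage_constant[OF cg]) simp
  moreover have "bounded S" unfolding S_def by (rule bounded_subset[of "{0..1}"]) auto
  ultimately have "compact S" using compact_eq_bounded_closed by blast
  moreover have "S \<noteq> {}"
  proof -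
    have "\<exists>x. 0 \<le> x \<and> x \<le> 1 \<and> h x - x = 0"
      by (rule IVT2'[OF _ _ _ cg]) (use b[of 0] b[of 1] in auto)
    then show ?thesis unfolding S_def by auto
  qed
  ultimately obtain pt where "pt \<in> S" "\<forall>t\<in>S. t \<le> pt" using compact_attains_sup by blast
  then show ?thesis unfolding S_def by auto
qed

lemma h_bounds:
  fixes K u :: real assumes "K > 0"
  shows "0 < 1 / (1 + K * exp u)" "1 / (1 + K * exp u) < 1"
proof -
  have "K * exp u > 0" using assms by simp
  then show "0 < 1 / (1 + K * exp u)" "1 / (1 + K * exp u) < 1" by (auto simp: divide_less_eq_1_pos)
qed

lemma h_mono:
  fixes K u v :: real assumes "K > 0" "u < v"
  shows "1 / (1 + K * exp v) < 1 / (1 + K * exp u)"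
proof -
  have "K * exp u < K * exp v" using assms by simp
  moreover have "K * exp u > 0" using assms by simp
  ultimately show ?thesis by (intro divide_strict_left_mono) (auto simp: add_pos_pos)
qed

lemma nm_bounds:
  fixes rp rm p :: real
  assumes "0 \<le> rp" "0 \<le> rm" "1 - rp - rm > 0" "0 \<le> p" "p \<le> 1"
  shows "0 \<le> noisy_mean rp rm p" "noisy_mean rp rm p \<le> 1"
proof -
  have "(1 - rp - rm) * p \<le> (1 - rp - rm)" using assms by (simp add: mult_left_le)
  moreover have "0 \<le> (1 - rp - rm) * p" using assms by simp
  ultimately show "0 \<le> noisy_mean rp rm p" "noisy_mean rp rm p \<le> 1"
    unfolding noisy_mean_def using assms by linarith+
qed

lemma part2:
  fixes rp rm beta eps pr :: real
  assumes beta: "beta > 0" and eps: "eps > 0" and rp: "0 \<le> rp" and rm: "0 \<le> rm"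
    and gap: "1 - rp - rm > 0" and pr: "0 < pr" "pr < 1" and pos: "rp + rm > 0"
  shows "(\<forall>p\<in>{0..1}. h_noisy rp rm beta eps pr p < h_clean beta eps pr p)
          \<and> (\<exists>pt ph. pt \<in> {0..1} \<and> ph \<in> {0..1}
               \<and> h_noisy rp rm beta eps pr pt = pt
               \<and> (\<forall>p\<in>{0..1}. h_noisy rp rm beta eps pr p = p \<longrightarrow> p \<le> pt)
               \<and> h_clean beta eps pr ph = ph
               \<and> (\<forall>p\<in>{0..1}. h_clean beta eps pr p = p \<longrightarrow> p \<le> ph)
               \<and> pt < ph)"
proof -
  define g where "g = 1 - rp - rm"
  define K where "K = (1 - pr) / pr"
  have K: "K > 0" using pr by (simp add: K_def)
  have g0: "g > 0" and g1: "g < 1" using gap pos by (auto simp: g_def)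
  have lt: "h_noisy rp rm beta eps pr p < h_clean beta eps pr p" if p: "p \<in> {0..1}" for p
  proof -
    define F where "F = noisy_mean rp rm p"
    have F01: "0 \<le> F" "F \<le> 1" using nm_bounds[OF rp rm gap] p by (auto simp: F_def)
    have p01: "0 \<le> p" "p \<le> 1" using p by auto
    have "F * (1 - F) - g^2 * (p * (1 - p)) = rp * rm + rp * g * (1 - p) + g * p * rm"
      unfolding F_def noisy_mean_def g_def by (simp add: algebra_simps power2_eq_square)
    also have "\<dots> \<ge> 0" using rp rm g0 p01 by (intro add_nonneg_nonneg mult_nonneg_nonneg) auto
    finally have i1: "g^2 * (p * (1 - p)) \<le> F * (1 - F)" by simp
    have g2: "g^2 < 1" using g0 g1 by (simp add: power_less_one_iff abs_less_iff)
    have "g^2 * eps < eps" using g2 eps by simp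
    then have i2: "g^2 * (p * (1 - p) + eps) < F * (1 - F) + eps" using i1 by (simp add: algebra_simps)
    have X0: "p * (1 - p) + eps > 0" using p01 eps by (simp add: add_nonneg_pos)
    have "sqrt (g^2 * (p * (1 - p) + eps)) < sqrt (F * (1 - F) + eps)" using i2 by simp
    then have i3: "g * sqrt (p * (1 - p) + eps) < sqrt (F * (1 - F) + eps)"
      using g0 by (simp add: real_sqrt_mult)
    define sc where "sc = sqrt (p * (1 - p) + eps)"
    define sn where "sn = sqrt (F * (1 - F) + eps)"
    have sc0: "sc > 0" using X0 by (simp add: sc_def)
    have sn0: "sn > 0" using i3 g0 sc0 unfolding sc_def[symmetric] sn_def[symmetric]
      by (smt (verit) mult_pos_pos)
    have "g / (beta * sn) < 1 / (beta * sc)"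
      using i3 sc0 sn0 beta unfolding sc_def[symmetric] sn_def[symmetric]
      by (simp add: field_simps)
    then have "- 1 / (beta * sc) < - g / (beta * sn)" by simp
    from h_mono[OF K this] show ?thesis
      unfolding h_noisy_def h_clean_def K_def[symmetric] g_def[symmetric] F_def[symmetric]
        sc_def[symmetric] sn_def[symmetric] by simp
  qed
  have cn: "continuous_on {0..1} (h_noisy rp rm beta eps pr)"
  proof -
    have nz: "sqrt (noisy_mean rp rm p * (1 - noisy_mean rp rm p) + eps) \<noteq> 0" if "p \<in> {0..1}" for p
      using nm_bounds[OF rp rm gap, of p] that eps
      by (smt (verit) atLeastAtMost_iff mult_nonneg_nonneg real_sqrt_eq_zero_cancel_iff)
    have nz2: "1 + K * exp u \<noteq> 0" for u using h_bounds(1)[OF K, of u] by auto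
    show ?thesis unfolding h_noisy_def K_def[symmetric]
      using nz nz2 beta by (intro continuous_intros) (auto simp: noisy_mean_def intro!: continuous_intros)
  qed
  have cc: "continuous_on {0..1} (h_clean beta eps pr)"
  proof -
    have nz: "sqrt (p * (1 - p) + eps) \<noteq> 0" if "p \<in> {0..1}" for p
      using that eps by (smt (verit) atLeastAtMost_iff mult_nonneg_nonneg real_sqrt_eq_zero_cancel_iff)
    have nz2: "1 + K * exp u \<noteq> 0" for u using h_bounds(1)[OF K, of u] by auto
    show ?thesis unfolding h_clean_def K_def[symmetric]
      using nz nz2 beta by (intro continuous_intros) auto
  qed
  have bn: "0 < h_noisy rp rm beta eps pr p" "h_noisy rp rm beta eps pr p < 1" for p
    unfolding h_noisy_def K_def[symmetric] using h_bounds[OF K] by auto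
  have bc: "0 < h_clean beta eps pr p" "h_clean beta eps pr p < 1" for p
    unfolding h_clean_def K_def[symmetric] using h_bounds[OF K] by auto
  obtain pt where pt: "pt \<in> {0..1}" "h_noisy rp rm beta eps pr pt = pt"
    "\<forall>p\<in>{0..1}. h_noisy rp rm beta eps pr p = p \<longrightarrow> p \<le> pt"
    using largest_fp[OF cn bn] by blast
  obtain ph where ph: "ph \<in> {0..1}" "h_clean beta eps pr ph = ph"
    "\<forall>p\<in>{0..1}. h_clean beta eps pr p = p \<longrightarrow> p \<le> ph"
    using largest_fp[OF cc bc] by blast
  have "pt < ph"
  proof -
    have gpt: "h_clean beta eps pr pt - pt > 0" using lt[OF pt(1)] pt(2) by simp
    have "continuous_on {pt..1} (\<lambda>p. h_clean beta eps pr p - p)"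
      by (intro continuous_intros continuous_on_subset[OF cc]) (use pt(1) in auto)
    then have "\<exists>x. pt \<le> x \<and> x \<le> 1 \<and> h_clean beta eps pr x - x = 0"
      by (rule IVT2'[rotated 3]) (use gpt bc[of 1] pt(1) in auto)
    then obtain x where x: "pt \<le> x" "x \<le> 1" "h_clean beta eps pr x = x" by auto
    have "x \<noteq> pt" using x gpt by auto
    then have "pt < x" using x by simp
    moreover have "x \<le> ph" using ph(3) x pt(1) by auto
    ultimately show ?thesis by simp
  qed
  then show ?thesis using lt pt ph by blast
qed

theorem theorem4:
  fixes r :: "'q \<Rightarrow> 'o::countable \<Rightarrow> bool"
    and q :: 'q
    and rho_p rho_m :: "'q \<Rightarrow> real"
    and pi_ref :: "'q \<Rightarrow> 'o pmf"
    and pi :: "nat \<Rightarrow> 'q \<Rightarrow> 'o pmf"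
    and beta eps :: real
  assumes beta: "beta > 0" and eps: "eps > 0"
    and rho_p: "0 \<le> rho_p q" "rho_p q \<le> 1"
    and rho_m: "0 \<le> rho_m q" "rho_m q \<le> 1"
    and gap: "1 - rho_p q - rho_m q > 0"
    and pref: "0 < succ_prob r q (pi_ref q)" "succ_prob r q (pi_ref q) < 1"
    and opt: "\<And>k (P :: 'o pmf). k \<ge> 1 \<Longrightarrow>
       ereal ((1 - rho_p q - rho_m q) * (succ_prob r q P - succ_prob r q (pi (k - 1) q))
              / sqrt (noisy_mean (rho_p q) (rho_m q) (succ_prob r q (pi (k - 1) q))
                      * (1 - noisy_mean (rho_p q) (rho_m q) (succ_prob r q (pi (k - 1) q))) + eps))
         - ereal beta * KL_pmf P (pi_ref q)
       \<le> ereal ((1 - rho_p q - rho_m q) * (succ_prob r q (pi k q) - succ_prob r q (pi (k - 1) q))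
              / sqrt (noisy_mean (rho_p q) (rho_m q) (succ_prob r q (pi (k - 1) q))
                      * (1 - noisy_mean (rho_p q) (rho_m q) (succ_prob r q (pi (k - 1) q))) + eps))
         - ereal beta * KL_pmf (pi k q) (pi_ref q)"
  shows "(\<forall>k\<ge>1. succ_prob r q (pi k q)
            = h_noisy (rho_p q) (rho_m q) beta eps (succ_prob r q (pi_ref q)) (succ_prob r q (pi (k - 1) q)))
       \<and> (rho_p q + rho_m q > 0 \<longrightarrow>
            (\<forall>p\<in>{0..1}. h_noisy (rho_p q) (rho_m q) beta eps (succ_prob r q (pi_ref q)) p
                         < h_clean beta eps (succ_prob r q (pi_ref q)) p)
          \<and> (\<exists>pt ph. pt \<in> {0..1} \<and> ph \<in> {0..1}
               \<and> h_noisy (rho_p q) (rho_m q) beta eps (succ_prob r q (pi_ref q)) pt = pt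
               \<and> (\<forall>p\<in>{0..1}. h_noisy (rho_p q) (rho_m q) beta eps (succ_prob r q (pi_ref q)) p = p \<longrightarrow> p \<le> pt)
               \<and> h_clean beta eps (succ_prob r q (pi_ref q)) ph = ph
               \<and> (\<forall>p\<in>{0..1}. h_clean beta eps (succ_prob r q (pi_ref q)) p = p \<longrightarrow> p \<le> ph)
               \<and> pt < ph))"
proof -
  define pr where "pr = succ_prob r q (pi_ref q)"
  define A where "A = {y. r q y}"
  have sp: "succ_prob r q P = measure_pmf.prob P A" for P
    unfolding succ_prob_def A_def by (rule expect_ind)
  have prA: "0 < measure_pmf.prob (pi_ref q) A" "measure_pmf.prob (pi_ref q) A < 1"
    using pref by (simp_all add: sp)
  have part1: "\<forall>k\<ge>1. succ_prob r q (pi k q)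
            = h_noisy (rho_p q) (rho_m q) beta eps (succ_prob r q (pi_ref q)) (succ_prob r q (pi (k - 1) q))"
  proof (intro allI impI)
    fix k :: nat assume k: "k \<ge> 1"
    define p0 where "p0 = succ_prob r q (pi (k-1) q)"
    define s where "s = sqrt (noisy_mean (rho_p q) (rho_m q) p0 * (1 - noisy_mean (rho_p q) (rho_m q) p0) + eps)"
    define g where "g = 1 - rho_p q - rho_m q"
    define C where "C = g / s"
    have lin: "g * (x - p0) / s = C * x + (- C * p0)" for x
      unfolding C_def by (simp add: right_diff_distrib diff_divide_distrib)
    obtain Ps where Ps: "measure_pmf.prob Ps A = 1 / (1 + (1 - measure_pmf.prob (pi_ref q) A) / measure_pmf.prob (pi_ref q) A * exp (- C / beta))"
      "\<forall>P. ereal (C * measure_pmf.prob Ps A + (- C * p0)) - ereal beta * KL_pmf Ps (pi_ref q)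
          \<le> ereal (C * measure_pmf.prob P A + (- C * p0)) - ereal beta * KL_pmf P (pi_ref q)
          \<longrightarrow> measure_pmf.prob P A = 1 / (1 + (1 - measure_pmf.prob (pi_ref q) A) / measure_pmf.prob (pi_ref q) A * exp (- C / beta))"
      using gibbs[OF beta prA, of C "- C * p0"] by blast
    have o: "ereal (g * (succ_prob r q Ps - p0) / s) - ereal beta * KL_pmf Ps (pi_ref q)
         \<le> ereal (g * (succ_prob r q (pi k q) - p0) / s) - ereal beta * KL_pmf (pi k q) (pi_ref q)"
      using opt[OF k, of Ps] unfolding p0_def[symmetric] s_def[symmetric] g_def[symmetric] .
    have "measure_pmf.prob (pi k q) A = 1 / (1 + (1 - measure_pmf.prob (pi_ref q) A) / measure_pmf.prob (pi_ref q) A * exp (- C / beta))"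
    proof (rule Ps(2)[rule_format])
      show "ereal (C * measure_pmf.prob Ps A + (- C * p0)) - ereal beta * KL_pmf Ps (pi_ref q)
          \<le> ereal (C * measure_pmf.prob (pi k q) A + (- C * p0)) - ereal beta * KL_pmf (pi k q) (pi_ref q)"
        using o unfolding lin sp .
    qed
    then have m: "succ_prob r q (pi k q) = 1 / (1 + (1 - succ_prob r q (pi_ref q)) / succ_prob r q (pi_ref q) * exp (- C / beta))"
      by (simp only: sp)
    have e: "- g / (beta * s) = - C / beta" unfolding C_def by (simp add: mult.commute)
    show "succ_prob r q (pi k q) = h_noisy (rho_p q) (rho_m q) beta eps (succ_prob r q (pi_ref q)) (succ_prob r q (pi (k - 1) q))"
      unfolding h_noisy_def p0_def[symmetric] s_def[symmetric] g_def[symmetric] e by (rule m)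
  qed
  show ?thesis
    apply (rule conjI[OF part1])
    apply (rule impI)
    apply (erule part2[OF beta eps rho_p(1) rho_m(1) gap pref])
    done
qed

end
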